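(* For $e\in\mathbf{I}_n(\underline{12}0)$ define its parameters $(p,q)$ by $p=|\{k: e_1\ldots e_nk\in\mathbf{I}_{n+1}(\underline{12}0),\ k>e_n\}|=n-e_n$ and $q=|\{k: e_1\ldots e_nk\in\mathbf{I}_{n+1}(\underline{12}0),\ k\le e_n\}|$. Then the unique element of $\mathbf{I}_1(\underline{12}0)$ has parameters $(1,1)$, and for every $e\in\mathbf{I}_n(\underline{12}0)$ with parameters $(p,q)$, the multiset of parameters of the sequences $e_1\ldots e_nk\in\mathbf{I}_{n+1}(\underline{12}0)$ (over all admissible $k$) is $$\{(p,2),(p-1,3),\ldots,(1,p+1),\ (p+1,q),(p+2,q-1),\ldots,(p+q,1)\}.$$ That is, $\underline{12}0$-avoiding inversion sequences grow according to the succession rule with root $(1,1)$ and $(p,q)\leadsto (p,2),(p-1,3),\ldots,(1,p+1),(p+1,q),(p+2,q-1),\ldots,(p+q,1)$.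
   Context: An inversion sequence of length $n$ is $e=e_1\ldots e_n$ with $0\le e_i<i$; $\mathbf{I}_n$ is their set. $\mathbf{I}_n(\underline{12}0)$ is the set of $e\in\mathbf{I}_n$ with no indices $2\le i<j\le n$ such that $e_j<e_{i-1}<e_i$. *)

theory Defs
  imports Main "HOL-Library.Multiset"
begin

text \<open>Inversion sequences are represented as lists of naturals, 0-indexed:
  the paper's e_i is the list entry e ! (i - 1).  The condition 0 \<le> e_i < i
  becomes e ! j < j + 1.\<close>

definition inv_seq :: "nat list \<Rightarrow> bool" where
  "inv_seq e \<longleftrightarrow> (\<forall>j < length e. e ! j < j + 1)"

text \<open>Avoidance of the vincular pattern 120 (underlined 12): no indices
  2 \<le> i < j \<le> n with e_j < e_(i-1) < e_i.  In 0-indexed positions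
  i' = i - 1, j' = j - 1 this reads 1 \<le> i' < j' < n.\<close>

definition avoids_120 :: "nat list \<Rightarrow> bool" where
  "avoids_120 e \<longleftrightarrow>
     \<not> (\<exists>i j. 1 \<le> i \<and> i < j \<and> j < length e \<and>
              e ! j < e ! (i - 1) \<and> e ! (i - 1) < e ! i)"

definition I120 :: "nat \<Rightarrow> nat list set" where
  "I120 n = {e. length e = n \<and> inv_seq e \<and> avoids_120 e}"

definition par_p :: "nat list \<Rightarrow> nat" where
  "par_p e = card {k. e @ [k] \<in> I120 (length e + 1) \<and> k > last e}"

definition par_q :: "nat list \<Rightarrow> nat" where
  "par_q e = card {k. e @ [k] \<in> I120 (length e + 1) \<and> k \<le> last e}"

definition params :: "nat list \<Rightarrow> nat \<times> nat" where
  "params e = (par_p e, par_q e)"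

end

theory Submission
  imports Defs
begin

definition Bs :: "nat list \<Rightarrow> nat set" where
  "Bs e = {e ! (i - 1) | i. 1 \<le> i \<and> i < length e \<and> e ! (i - 1) < e ! i}"

lemma inv2: assumes "length e = n" "inv_seq e"
  shows "inv_seq (e @ [k]) \<longleftrightarrow> k \<le> n"
proof
  assume "inv_seq (e @ [k])"
  hence "(e @ [k]) ! n < n + 1" unfolding inv_seq_def using assms by simp
  thus "k \<le> n" using assms by (simp add: nth_append)
next
  assume k: "k \<le> n"
  show "inv_seq (e @ [k])" unfolding inv_seq_def
  proof (intro allI impI)
    fix j assume "j < length (e @ [k])"
    hence "j < n \<or> j = n" using assms by auto
    thus "(e @ [k]) ! j < j + 1"
      using assms k unfolding inv_seq_def by (auto simp: nth_append)
  qed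
qed

lemma av2: assumes len: "length e = n" and av: "avoids_120 e"
  shows "avoids_120 (e @ [k]) \<longleftrightarrow> (\<forall>b \<in> Bs e. b \<le> k)"
proof
  assume a: "avoids_120 (e @ [k])"
  show "\<forall>b \<in> Bs e. b \<le> k"
  proof
    fix b assume "b \<in> Bs e"
    then obtain i where i: "1 \<le> i" "i < n" "e ! (i - 1) < e ! i" "b = e ! (i - 1)"
      unfolding Bs_def using len by auto
    show "b \<le> k"
    proof (rule ccontr)
      assume "\<not> b \<le> k"
      hence "(e @ [k]) ! n < (e @ [k]) ! (i - 1) \<and> (e @ [k]) ! (i - 1) < (e @ [k]) ! i"
        using i len by (simp add: nth_append)
      moreover have "i < n" "n < length (e @ [k])" using i len by auto
      ultimately show False using a i(1) unfolding avoids_120_def by blast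
    qed
  qed
next
  assume b: "\<forall>b \<in> Bs e. b \<le> k"
  show "avoids_120 (e @ [k])" unfolding avoids_120_def
  proof clarify
    fix i j assume h: "1 \<le> i" "i < j" "j < length (e @ [k])"
      "(e @ [k]) ! j < (e @ [k]) ! (i - 1)" "(e @ [k]) ! (i - 1) < (e @ [k]) ! i"
    show False
    proof (cases "j < n")
      case True
      have "i - 1 < n" "i < n" using h True by auto
      hence "e ! j < e ! (i - 1)" "e ! (i - 1) < e ! i" using h len True by (simp_all add: nth_append)
      thus False using av h(1,2) True len unfolding avoids_120_def by blast
    next
      case False
      hence jn: "j = n" using h len by auto
      have "i - 1 < n" "i < n" using h jn by auto
      hence "e ! (i - 1) < e ! i" "k < e ! (i - 1)" using h len jn by (simp_all add: nth_append)
      moreover have "i < length e" using h jn len by simp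
      ultimately have "e ! (i - 1) \<in> Bs e" "k < e ! (i - 1)" using h(1)
        unfolding Bs_def by auto
      thus False using b by force
    qed
  qed
qed

definition Mb :: "nat list \<Rightarrow> nat" where
  "Mb e = Max (insert 0 (Bs e))"

lemma Bs_fin: "finite (Bs e)"
proof -
  have "Bs e \<subseteq> (\<lambda>i. e ! (i - 1)) ` {..<length e}" unfolding Bs_def by auto
  thus ?thesis by (rule finite_subset) auto
qed

lemma Mb_le_iff: "Mb e \<le> k \<longleftrightarrow> (\<forall>b \<in> Bs e. b \<le> k)"
  unfolding Mb_def using Bs_fin by simp

lemma ext_iff:
  assumes "e \<in> I120 n"
  shows "e @ [k] \<in> I120 (n + 1) \<longleftrightarrow> Mb e \<le> k \<and> k \<le> n"
proof -
  have len: "length e = n" and inv: "inv_seq e" and av: "avoids_120 e"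
    using assms by (auto simp: I120_def)
  show ?thesis using inv2[OF len inv, of k] av2[OF len av, of k] len Mb_le_iff[of e k]
    unfolding I120_def by auto
qed

lemma Mb_le_last:
  assumes "e \<in> I120 n" "n \<ge> 1"
  shows "Mb e \<le> last e"
  unfolding Mb_le_iff
proof
  have len: "length e = n" and av: "avoids_120 e"
    using assms by (auto simp: I120_def)
  have "e \<noteq> []" using len assms(2) by auto
  hence lst: "last e = e ! (n - 1)" using len by (simp add: last_conv_nth)
  fix b assume "b \<in> Bs e"
  then obtain i where i: "1 \<le> i" "i < n" "e ! (i - 1) < e ! i" "b = e ! (i - 1)"
    unfolding Bs_def using len by auto
  show "b \<le> last e"
  proof (cases "i = n - 1")
    case True thus ?thesis using i lst by simp
  next
    case False
    hence "i < n - 1" "n - 1 < length e" using i len by auto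
    hence "\<not> (e ! (n - 1) < e ! (i - 1))" using av i unfolding avoids_120_def by blast
    thus ?thesis using i lst by simp
  qed
qed

lemma Bs_snoc:
  assumes "e \<noteq> []"
  shows "Bs (e @ [k]) = Bs e \<union> (if last e < k then {last e} else {})"
proof -
  have lst: "last e = e ! (length e - 1)" using assms by (simp add: last_conv_nth)
  show ?thesis
  proof (intro set_eqI iffI)
    fix b assume "b \<in> Bs (e @ [k])"
    then obtain i where i: "1 \<le> i" "i < length e + 1"
      "(e@[k]) ! (i - 1) < (e@[k]) ! i" "b = (e@[k]) ! (i - 1)"
      unfolding Bs_def by auto
    have i1: "i - 1 < length e" using i by auto
    show "b \<in> Bs e \<union> (if last e < k then {last e} else {})"
    proof (cases "i = length e")
      case True thus ?thesis using i i1 lst by (auto simp: nth_append)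
    next
      case False
      hence "i < length e" using i by simp
      hence "e ! (i - 1) < e ! i" "b = e ! (i - 1)" using i i1 by (simp_all add: nth_append)
      thus ?thesis using i(1) \<open>i < length e\<close> unfolding Bs_def by auto
    qed
  next
    fix b assume "b \<in> Bs e \<union> (if last e < k then {last e} else {})"
    thus "b \<in> Bs (e @ [k])"
    proof
      assume "b \<in> Bs e"
      then obtain i where i: "1 \<le> i" "i < length e" "e ! (i - 1) < e ! i" "b = e ! (i - 1)"
        unfolding Bs_def by auto
      have i1: "i - 1 < length e" using i by auto
      have "(e@[k]) ! (i - 1) < (e@[k]) ! i \<and> b = (e@[k]) ! (i - 1)"
        using i i1 by (simp add: nth_append)
      thus ?thesis unfolding Bs_def using i(1,2) by force
    next
      assume h: "b \<in> (if last e < k then {last e} else {})"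
      hence "last e < k" "b = last e" by (auto split: if_splits)
      moreover have "length e - 1 < length e" "1 \<le> length e" using assms by (auto simp: Suc_le_eq)
      ultimately have "(e@[k]) ! (length e - 1) < (e@[k]) ! (length e) \<and> b = (e@[k]) ! (length e - 1)"
        using lst by (simp add: nth_append)
      thus ?thesis unfolding Bs_def using \<open>1 \<le> length e\<close> by force
    qed
  qed
qed

lemma Mb_snoc:
  assumes "e \<noteq> []" "Mb e \<le> last e"
  shows "Mb (e @ [k]) = (if last e < k then last e else Mb e)"
proof (cases "last e < k")
  case True
  hence "Mb (e @ [k]) = Max (insert (last e) (insert 0 (Bs e)))"
    unfolding Mb_def using Bs_snoc[OF assms(1)] by (simp add: insert_commute)
  also have "\<dots> = max (last e) (Mb e)" unfolding Mb_def using Bs_fin by simp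
  finally show ?thesis using True assms(2) by simp
next
  case False thus ?thesis unfolding Mb_def using Bs_snoc[OF assms(1)] by simp
qed

lemma params_eq:
  assumes "e \<in> I120 n" "n \<ge> 1"
  shows "par_p e = n - last e" "par_q e = last e + 1 - Mb e"
proof -
  have len: "length e = n" using assms by (simp add: I120_def)
  have ml: "Mb e \<le> last e" by (rule Mb_le_last[OF assms])
  have "e \<noteq> []" using len assms(2) by auto
  hence lst: "last e = e ! (n - 1)" using len by (simp add: last_conv_nth)
  have "n - 1 < length e" using len assms(2) by simp
  hence "e ! (n - 1) < n - 1 + 1" using assms(1) unfolding I120_def inv_seq_def by blast
  hence ln: "last e < n" using lst assms(2) by simp
  have "{k. e @ [k] \<in> I120 (length e + 1) \<and> k > last e} = {last e + 1..n}"
  proof (intro set_eqI)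
    fix k show "k \<in> {k. e @ [k] \<in> I120 (length e + 1) \<and> k > last e} \<longleftrightarrow> k \<in> {last e + 1..n}"
      unfolding len mem_Collect_eq atLeastAtMost_iff ext_iff[OF assms(1)] using ml by linarith
  qed
  thus "par_p e = n - last e" unfolding par_p_def by simp
  have "{k. e @ [k] \<in> I120 (length e + 1) \<and> k \<le> last e} = {Mb e..last e}"
  proof (intro set_eqI)
    fix k show "k \<in> {k. e @ [k] \<in> I120 (length e + 1) \<and> k \<le> last e} \<longleftrightarrow> k \<in> {Mb e..last e}"
      unfolding len mem_Collect_eq atLeastAtMost_iff ext_iff[OF assms(1)] using ml ln by linarith
  qed
  thus "par_q e = last e + 1 - Mb e" unfolding par_q_def by simp
qed

lemma main_step:
  assumes e: "e \<in> I120 n" and n: "n \<ge> 1"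
  shows "image_mset (\<lambda>k. params (e @ [k])) (mset_set {k. e @ [k] \<in> I120 (n + 1)})
         = mset ([(par_p e - i, 2 + i). i \<leftarrow> [0..<par_p e]]
                 @ [(par_p e + 1 + i, par_q e - i). i \<leftarrow> [0..<par_q e]])"
proof -
  define L where "L = last e"
  define M where "M = Mb e"
  have len: "length e = n" using e by (simp add: I120_def)
  have ne: "e \<noteq> []" using len n by auto
  have hML: "M \<le> L" unfolding M_def L_def by (rule Mb_le_last[OF e n])
  have lst: "last e = e ! (n - 1)" using len ne by (simp add: last_conv_nth)
  have "n - 1 < length e" using len n by simp
  hence "e ! (n - 1) < n - 1 + 1" using e unfolding I120_def inv_seq_def by blast
  hence Ln: "L < n" using lst n L_def by simp
  have pp: "par_p e = n - L" using params_eq[OF e n] L_def by simp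
  have pq: "par_q e = L + 1 - M" using params_eq[OF e n] L_def M_def by simp
  have ch: "{k. e @ [k] \<in> I120 (n + 1)} = {M..<n+1}" unfolding M_def set_eq_iff mem_Collect_eq atLeastLessThan_iff ext_iff[OF e] by (intro allI) linarith
  define f where "f k = (n + 1 - k, k + 1 - (if L < k then L else M))" for k
  have fk: "params (e @ [k]) = f k" if "k \<in> {M..<n+1}" for k
  proof -
    have ek: "e @ [k] \<in> I120 (n + 1)" using ext_iff[OF e] that M_def by auto
    have "last (e @ [k]) = k" by simp
    moreover have "Mb (e @ [k]) = (if L < k then L else M)"
      using Mb_snoc[OF ne] hML L_def M_def by simp
    ultimately show ?thesis using params_eq[OF ek] unfolding params_def f_def by simp
  qed
  have "image_mset (\<lambda>k. params (e @ [k])) (mset_set {k. e @ [k] \<in> I120 (n + 1)})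
      = image_mset f (mset_set {M..<n+1})"
    unfolding ch by (rule image_mset_cong) (simp add: fk)
  also have "\<dots> = mset (map f [M..<n+1])" by (simp only: mset_upt[symmetric] mset_map)
  also have "[M..<n+1] = [M..<L+1] @ [L+1..<n+1]"
  proof -
    have "[M..<n+1] = [M..<(L+1) + (n - L)]" using Ln by simp
    also have "\<dots> = [M..<L+1] @ [L+1..<(L+1)+(n-L)]"
      by (rule upt_add_eq_append) (use hML in simp)
    also have "(L+1)+(n-L) = n+1" using Ln by simp
    finally show ?thesis .
  qed
  also have "mset (map f ([M..<L+1] @ [L+1..<n+1]))
      = mset (map f [L+1..<n+1]) + mset (rev (map f [M..<L+1]))" by simp
  also have "map f [L+1..<n+1] = [(par_p e - i, 2 + i). i \<leftarrow> [0..<par_p e]]"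
  proof (rule nth_equalityI)
    show "length (map f [L+1..<n+1]) = length [(par_p e - i, 2 + i). i \<leftarrow> [0..<par_p e]]"
      using pp Ln by simp
    fix i assume "i < length (map f [L+1..<n+1])"
    hence i: "i < n - L" by (simp del: upt_Suc)
    hence "map f [L+1..<n+1] ! i = f (L + 1 + i)" by (simp del: upt_Suc)
    also have "\<dots> = (n - L - i, 2 + i)" unfolding f_def by simp
    finally show "map f [L+1..<n+1] ! i = [(par_p e - i, 2 + i). i \<leftarrow> [0..<par_p e]] ! i"
      using pp i by (simp del: upt_Suc)
  qed
  also have "rev (map f [M..<L+1]) = [(par_p e + 1 + i, par_q e - i). i \<leftarrow> [0..<par_q e]]"
  proof (rule nth_equalityI)
    show "length (rev (map f [M..<L+1])) = length [(par_p e + 1 + i, par_q e - i). i \<leftarrow> [0..<par_q e]]"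
      using pq by (simp del: upt_Suc)
    fix i assume "i < length (rev (map f [M..<L+1]))"
    hence i: "i < L + 1 - M" by (simp del: upt_Suc)
    have "rev (map f [M..<L+1]) ! i = f (L - i)"
      using i hML by (simp add: rev_nth del: upt_Suc)
    also have "\<dots> = (n + 1 - (L - i), L - i + 1 - M)" unfolding f_def by simp
    also have "\<dots> = (par_p e + 1 + i, par_q e - i)"
      using pp pq i hML Ln by (simp only: prod.inject) linarith
    also have "\<dots> = [(par_p e + 1 + i, par_q e - i). i \<leftarrow> [0..<par_q e]] ! i"
      using pq i by (simp del: upt_Suc)
    finally show "rev (map f [M..<L+1]) ! i = [(par_p e + 1 + i, par_q e - i). i \<leftarrow> [0..<par_q e]] ! i" .
  qed
  finally show ?thesis by (simp add: union_commute)
qed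

theorem proposition3p3:
  shows "I120 1 = {[0]} \<and> params [0] = (1, 1) \<and>
    (\<forall>n \<ge> 1. \<forall>e \<in> I120 n.
       par_p e = n - last e \<and>
       image_mset (\<lambda>k. params (e @ [k])) (mset_set {k. e @ [k] \<in> I120 (n + 1)})
         = mset ([(par_p e - i, 2 + i). i \<leftarrow> [0..<par_p e]]
                 @ [(par_p e + 1 + i, par_q e - i). i \<leftarrow> [0..<par_q e]]))"
proof (intro conjI allI impI ballI)
  show I1: "I120 1 = {[0]}"
  proof (intro set_eqI iffI)
    fix e :: "nat list" assume "e \<in> I120 1"
    hence "length e = 1" "e ! 0 < 1" unfolding I120_def inv_seq_def by auto
    thus "e \<in> {[0]}" by (cases e) auto
  next
    fix e :: "nat list" assume "e \<in> {[0]}"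
    thus "e \<in> I120 1" unfolding I120_def inv_seq_def avoids_120_def by auto
  qed
  have "[0] \<in> I120 1" using I1 by simp
  moreover have "Mb [0] = 0" unfolding Mb_def Bs_def by simp
  ultimately show "params [0] = (1, 1)" using params_eq[of "[0]" 1] unfolding params_def by simp
next
  fix n e assume "1 \<le> n" "e \<in> I120 n"
  thus "par_p e = n - last e" by (rule params_eq(1)[rotated])
  show "image_mset (\<lambda>k. params (e @ [k])) (mset_set {k. e @ [k] \<in> I120 (n + 1)})
         = mset ([(par_p e - i, 2 + i). i \<leftarrow> [0..<par_p e]]
                 @ [(par_p e + 1 + i, par_q e - i). i \<leftarrow> [0..<par_q e]])"
    by (rule main_step) fact+
qed

end
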